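(* Let $(G,c,r)$ be an instance of the metric Many-Visits TSP and let $\alpha\geq1$. Let $T_1$ be a Hamiltonian cycle in $G$ (a single-visit TSP tour) with $c(T_1)\leq\alpha\cdot c(\mathrm{OPT}_1)$, where $\mathrm{OPT}_1$ is an optimal single-visit tour, and let $P\in\mathbb{Z}_{\geq0}^E$ be an optimal solution of the transportation problem with prescriptions $r-1$, i.e. a minimum-cost $P$ with $d_P(v)=2(r(v)-1)$ for all $v\in V$. Then the multigraph $T=T_1+P$ is a feasible solution of the Many-Visits TSP instance $(G,c,r)$, and $c(T)\leq(\alpha+1)\cdot c(\mathrm{OPT}_r)$, where $\mathrm{OPT}_r$ is an optimal Many-Visits TSP solution for $(G,c,r)$.
   Context: $G=(V,E)$ is the complete undirected graph on $n$ vertices with a self-loop at each vertex; $d_x(v)$ is the sum of $x$-values of edges incident to $v$, the self-loop counted twice. Costs $c:E\to\mathbb{R}_{\geq0}$ satisfy the triangle inequality, including $c(vv)\leq 2c(uv)$ for all $u,v$. A feasible Many-Visits TSP solution for requests $r:V\to\mathbb{Z}_{\geq1}$ is $z\in\mathbb{Z}_{\geq0}^E$ with $d_z(v)=2r(v)$ for all $v$ and $(V,\mathrm{supp}(z))$ connected; its cost is $\sum_e c(e)z(e)$. The transportation problem with prescriptions $q:V\to\mathbb{Z}_{\geq0}$ asks for a minimum-cost $z\in\mathbb{Z}_{\geq0}^E$ with $d_z(v)=2q(v)$ for all $v$ (no connectivity). For multigraphs $H_1,H_2$ on $V$, $H_1+H_2$ is the union of their edge multisets. *)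

theory Defs
  imports Complex_Main
begin

text \<open>Edges of the complete graph with a self-loop at each vertex, on the vertex set V:
  an edge is the set {u,v} (a self-loop is the singleton {v}).
  Multigraphs / integer edge vectors are functions x :: 'a set \<Rightarrow> nat, only their
  values on the edges matter.\<close>

definition edges :: "'a set \<Rightarrow> 'a set set" where
  "edges V = {e. \<exists>u\<in>V. \<exists>v\<in>V. e = {u, v}}"

definition deg :: "'a set \<Rightarrow> ('a set \<Rightarrow> nat) \<Rightarrow> 'a \<Rightarrow> nat" where
  "deg V x v = (\<Sum>e\<in>edges V. if v \<in> e then (if e = {v} then 2 else 1) * x e else 0)"

definition cost :: "'a set \<Rightarrow> ('a set \<Rightarrow> real) \<Rightarrow> ('a set \<Rightarrow> nat) \<Rightarrow> real" where
  "cost V c x = (\<Sum>e\<in>edges V. c e * real (x e))"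

text \<open>Metric costs: nonnegative and satisfying the triangle inequality, including for
  self-loops (taking w = u gives c(uu) \<le> 2 c(uv)).\<close>
definition metric_cost :: "'a set \<Rightarrow> ('a set \<Rightarrow> real) \<Rightarrow> bool" where
  "metric_cost V c \<longleftrightarrow> (\<forall>e\<in>edges V. c e \<ge> 0) \<and>
     (\<forall>u\<in>V. \<forall>v\<in>V. \<forall>w\<in>V. c {u, w} \<le> c {u, v} + c {v, w})"

definition supp_connected :: "'a set \<Rightarrow> ('a set \<Rightarrow> nat) \<Rightarrow> bool" where
  "supp_connected V x \<longleftrightarrow>
     (\<forall>u\<in>V. \<forall>v\<in>V. (u, v) \<in> ({(a, b). a \<in> V \<and> b \<in> V \<and> x {a, b} > 0})\<^sup>*)"

definition mvtsp_feasible :: "'a set \<Rightarrow> ('a \<Rightarrow> nat) \<Rightarrow> ('a set \<Rightarrow> nat) \<Rightarrow> bool" where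
  "mvtsp_feasible V r z \<longleftrightarrow> (\<forall>v\<in>V. deg V z v = 2 * r v) \<and> supp_connected V z"

definition mvtsp_opt :: "'a set \<Rightarrow> ('a set \<Rightarrow> real) \<Rightarrow> ('a \<Rightarrow> nat) \<Rightarrow> real" where
  "mvtsp_opt V c r = Inf {cost V c z | z. mvtsp_feasible V r z}"

text \<open>A (single-visit) TSP tour = Hamiltonian cycle = feasible solution with all requests 1.\<close>
definition tsp_tour :: "'a set \<Rightarrow> ('a set \<Rightarrow> nat) \<Rightarrow> bool" where
  "tsp_tour V z \<longleftrightarrow> mvtsp_feasible V (\<lambda>_. 1) z"

definition transport_opt :: "'a set \<Rightarrow> ('a set \<Rightarrow> real) \<Rightarrow> ('a \<Rightarrow> nat) \<Rightarrow> ('a set \<Rightarrow> nat) \<Rightarrow> bool" where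
  "transport_opt V c q P \<longleftrightarrow> (\<forall>v\<in>V. deg V P v = 2 * q v) \<and>
     (\<forall>Q. (\<forall>v\<in>V. deg V Q v = 2 * q v) \<longrightarrow> cost V c P \<le> cost V c Q)"

end

theory Submission
  imports Defs
begin


lemma finite_edges: "finite V \<Longrightarrow> finite (edges V)"
proof -
  assume "finite V"
  have "edges V \<subseteq> Pow V" unfolding edges_def by auto
  then show ?thesis using \<open>finite V\<close> by (meson finite_Pow_iff finite_subset)
qed

lemma edge_in: "p \<in> V \<Longrightarrow> q \<in> V \<Longrightarrow> {p,q} \<in> edges V"
  unfolding edges_def by auto

lemma deg_add: "deg V (\<lambda>e. x e + y e) u = deg V x u + deg V y u"
  unfolding deg_def by (auto simp: sum.distrib[symmetric] distrib_left intro!: sum.cong)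

lemma cost_add: "cost V c (\<lambda>e. x e + y e) = cost V c x + cost V c y"
  unfolding cost_def by (auto simp: sum.distrib[symmetric] distrib_left intro!: sum.cong)

lemma deg_delta:
  assumes "finite V" "p \<in> V" "q \<in> V"
  shows "deg V (\<lambda>e. if e = {p,q} then 1 else 0) u = (if u = p then 1 else 0) + (if u = q then 1 else 0)"
proof -
  have "deg V (\<lambda>e. if e = {p,q} then 1 else 0) u =
     (\<Sum>e\<in>edges V. if e = {p,q} then (if u \<in> e then (if e = {u} then 2 else 1) else 0) else 0)"
    unfolding deg_def by (auto intro!: sum.cong)
  also have "\<dots> = (if u \<in> {p,q} then (if {p,q} = {u} then 2 else 1) else 0)"
    using assms by (simp add: finite_edges edge_in)
  finally show ?thesis by (auto simp: doubleton_eq_iff)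
qed

lemma cost_delta:
  assumes "finite V" "p \<in> V" "q \<in> V"
  shows "cost V c (\<lambda>e. if e = {p,q} then 1 else 0) = c {p,q}"
proof -
  have "cost V c (\<lambda>e. if e = {p,q} then 1 else 0) = (\<Sum>e\<in>edges V. if e = {p,q} then c e else 0)"
    unfolding cost_def by (auto intro!: sum.cong)
  also have "\<dots> = c {p,q}" using assms by (simp add: finite_edges edge_in)
  finally show ?thesis .
qed

lemma remove_edge:
  assumes "finite V" "p \<in> V" "q \<in> V" "x {p,q} > 0"
  defines "y \<equiv> (\<lambda>e. if e = {p,q} then x e - 1 else x e)"
  shows "deg V y u + (if u = p then 1 else 0) + (if u = q then 1 else 0) = deg V x u"
    and "cost V c y + c {p,q} = cost V c x"
proof -
  have xe: "x = (\<lambda>e. y e + (if e = {p,q} then 1 else 0))"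
    using assms(4) unfolding y_def by auto
  show "deg V y u + (if u = p then 1 else 0) + (if u = q then 1 else 0) = deg V x u"
  proof -
    have "deg V x u = deg V y u + deg V (\<lambda>e. if e = {p,q} then 1 else 0) u"
      by (subst xe) (rule deg_add)
    then show ?thesis by (simp add: deg_delta[OF assms(1-3)])
  qed
  show "cost V c y + c {p,q} = cost V c x"
  proof -
    have "cost V c x = cost V c y + cost V c (\<lambda>e. if e = {p,q} then 1 else 0)"
      by (subst xe) (rule cost_add)
    then show ?thesis by (simp add: cost_delta[OF assms(1-3)])
  qed
qed

lemma cost_nonneg: "metric_cost V c \<Longrightarrow> cost V c x \<ge> 0"
  unfolding cost_def metric_cost_def by (auto intro!: sum_nonneg)

definition R :: "'a set \<Rightarrow> ('a set \<Rightarrow> nat) \<Rightarrow> ('a \<times> 'a) set" where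
  "R V x = {(a, b). a \<in> V \<and> b \<in> V \<and> x {a, b} > 0}"

lemma supp_connected_R: "supp_connected V x \<longleftrightarrow> (\<forall>u\<in>V. \<forall>v\<in>V. (u, v) \<in> (R V x)\<^sup>*)"
  unfolding supp_connected_def R_def by simp

lemma R_sym: "(a, w) \<in> (R V x)\<^sup>* \<Longrightarrow> (w, a) \<in> (R V x)\<^sup>*"
proof -
  assume "(a, w) \<in> (R V x)\<^sup>*"
  then have "(w, a) \<in> ((R V x)\<inverse>)\<^sup>*" by (rule rtrancl_converseI)
  moreover have "(R V x)\<inverse> = R V x" unfolding R_def by (auto simp: insert_commute)
  ultimately show ?thesis by simp
qed

lemma nbr:
  assumes "finite V" "s \<in> V" "p \<in> V" "x {s} = 0" "deg V x s > x {s, p}"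
  shows "\<exists>b\<in>V. b \<noteq> s \<and> b \<noteq> p \<and> x {s, b} > 0"
proof (rule ccontr)
  assume H: "\<not> ?thesis"
  have "deg V x s = (\<Sum>e\<in>edges V. if e = {s,p} then (if s \<in> e then (if e = {s} then 2 else 1) * x e else 0) else 0)"
    unfolding deg_def
  proof (rule sum.cong)
    fix e assume "e \<in> edges V"
    then obtain u w where e: "e = {u, w}" "u \<in> V" "w \<in> V" unfolding edges_def by auto
    show "(if s \<in> e then (if e = {s} then 2 else 1) * x e else 0) =
      (if e = {s,p} then (if s \<in> e then (if e = {s} then 2 else 1) * x e else 0) else 0)"
    proof (cases "e = {s,p}")
      case True then show ?thesis by simp
    next
      case ne: False
      show ?thesis
      proof (cases "s \<in> e")
        case False then show ?thesis using ne by simp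
      next
        case True
        then obtain b where b: "e = {s, b}" "b \<in> V" using e by blast
        show ?thesis
        proof (cases "b = s")
          case True then show ?thesis using b assms(4) by simp
        next
          case False
          then have "b \<noteq> p" using b ne by blast
          have HH: "\<forall>b\<in>V. b = s \<or> b = p \<or> x {s, b} = 0" using H by auto
          have "x {s,b} = 0" using bspec[OF HH b(2)] \<open>b \<noteq> s\<close> \<open>b \<noteq> p\<close> by simp
          then show ?thesis using b ne by simp
        qed
      qed
    qed
  qed simp
  also have "\<dots> = (if {s,p} \<in> edges V then (if s \<in> {s,p} then (if {s,p} = {s} then 2 else 1) * x {s,p} else 0) else 0)"
    by (rule sum.delta) (rule finite_edges[OF assms(1)])
  also have "\<dots> = (if {s,p} = {s} then 2 else 1) * x {s,p}"
    using assms by (simp add: edge_in)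
  finally show False using assms(4,5) by (cases "p = s") auto
qed

lemma closed_even:
  assumes "finite V" "C \<subseteq> V" "\<forall>a\<in>C. \<forall>b\<in>V. x {a, b} > 0 \<longrightarrow> b \<in> C"
  shows "even (\<Sum>u\<in>C. deg V x u)"
proof -
  have "(\<Sum>u\<in>C. deg V x u) = (\<Sum>e\<in>edges V. \<Sum>u\<in>C. if u \<in> e then (if e = {u} then 2 else 1) * x e else 0)"
    unfolding deg_def by (rule sum.swap)
  also have "even \<dots>"
  proof (rule dvd_sum)
    fix e assume "e \<in> edges V"
    then obtain p q where e: "e = {p, q}" "p \<in> V" "q \<in> V" unfolding edges_def by auto
    have fC: "finite C" using assms(1,2) finite_subset by auto
    show "even (\<Sum>u\<in>C. if u \<in> e then (if e = {u} then 2 else 1) * x e else 0)"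
    proof (cases "x e = 0")
      case True then show ?thesis by (subst sum.neutral) auto
    next
      case False
      then have pq: "p \<in> C \<longleftrightarrow> q \<in> C" using assms(3) e by (auto simp: insert_commute)
      show ?thesis
      proof (cases "p \<in> C")
        case False
        then have "\<forall>u\<in>C. u \<notin> e" using pq e by auto
        then show ?thesis by simp
      next
        case True
        have "(\<Sum>u\<in>C. if u \<in> e then (if e = {u} then 2 else 1) * x e else 0)
          = (\<Sum>u\<in>C \<inter> e. (if e = {u} then 2 else 1) * x e)"
          using fC by (simp add: sum.inter_restrict)
        also have "C \<inter> e = e" using True pq e by auto
        finally show ?thesis using e by (cases "p = q") (auto simp: doubleton_eq_iff)
      qed
    qed
  qed
  finally show ?thesis .
qed

lemma odd_partner:
  assumes "finite V" "a \<in> V" "odd (deg V x a)"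
  shows "\<exists>w\<in>V. w \<noteq> a \<and> odd (deg V x w) \<and> (a, w) \<in> (R V x)\<^sup>*"
proof (rule ccontr)
  assume H: "\<not> ?thesis"
  define C where "C = {w\<in>V. (a, w) \<in> (R V x)\<^sup>*}"
  have CV: "C \<subseteq> V" unfolding C_def by auto
  have fC: "finite C" using assms(1) CV finite_subset by auto
  have aC: "a \<in> C" unfolding C_def using assms(2) by auto
  have cl: "\<forall>w\<in>C. \<forall>b\<in>V. x {w, b} > 0 \<longrightarrow> b \<in> C"
  proof (intro ballI impI)
    fix w b assume "w \<in> C" "b \<in> V" "x {w, b} > 0"
    then have "(w, b) \<in> R V x" "(a, w) \<in> (R V x)\<^sup>*" unfolding R_def C_def by auto
    then show "b \<in> C" using \<open>b \<in> V\<close> unfolding C_def by auto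
  qed
  have ev: "even (\<Sum>u\<in>C. deg V x u)" by (rule closed_even[OF assms(1) CV cl])
  have "(\<Sum>u\<in>C. deg V x u) = deg V x a + (\<Sum>u\<in>C - {a}. deg V x u)"
    using fC aC by (simp add: sum.remove)
  moreover have "even (\<Sum>u\<in>C - {a}. deg V x u)"
    by (rule dvd_sum) (use H in \<open>auto simp: C_def\<close>)
  ultimately show False using ev assms(3) by auto
qed

lemma path_first:
  assumes "(v, a) \<in> r\<^sup>*"
  shows "a = v \<or> (\<exists>p1. (v, p1) \<in> r \<and> (p1, a) \<in> {(p, q). (p, q) \<in> r \<and> p \<noteq> v \<and> q \<noteq> v}\<^sup>*)"
  using assms
proof (induction rule: rtrancl_induct)
  case base then show ?case by simp
next
  case (step w w')
  show ?case
  proof (cases "w' = v")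
    case True then show ?thesis by simp
  next
    case False
    show ?thesis
    proof (cases "w = v")
      case True then show ?thesis using step by auto
    next
      case False
      with step.IH obtain p1 where "(v, p1) \<in> r" "(p1, w) \<in> {(p, q). (p, q) \<in> r \<and> p \<noteq> v \<and> q \<noteq> v}\<^sup>*" by auto
      moreover have "(w, w') \<in> {(p, q). (p, q) \<in> r \<and> p \<noteq> v \<and> q \<noteq> v}"
        using step.hyps(2) False \<open>w' \<noteq> v\<close> by auto
      ultimately show ?thesis by (meson rtrancl.rtrancl_into_rtrancl)
    qed
  qed
qed



lemma metric_edge: "metric_cost V c \<Longrightarrow> p \<in> V \<Longrightarrow> q \<in> V \<Longrightarrow> c {p,q} \<ge> 0"
proof -
  assume "metric_cost V c" "p \<in> V" "q \<in> V"
  then have "{p,q} \<in> edges V" "\<forall>e\<in>edges V. c e \<ge> 0" by (auto simp: edge_in metric_cost_def)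
  then show ?thesis by blast
qed

lemma split_off:
  assumes V: "finite V" and m: "metric_cost V c" and sab: "s \<in> V" "a \<in> V" "b \<in> V"
    and za: "z {s,a} > 0"
    and z1: "z1 = (\<lambda>e. if e = {s,a} then z e - 1 else z e)" and zb: "z1 {s,b} > 0"
    and z0: "z0 = (\<lambda>e. if e = {s,b} then z1 e - 1 else z1 e)"
    and z2: "z2 = (\<lambda>e. z0 e + (if e = {a,b} then 1 else 0))"
  shows "deg V z1 u + (if u = s then 1 else 0) + (if u = a then 1 else 0) = deg V z u"
    and "deg V z0 u + (if u = s then 1 else 0) + (if u = b then 1 else 0) = deg V z1 u"
    and "deg V z2 u + (if u = s then 2 else 0) = deg V z u"
    and "cost V c z2 \<le> cost V c z"
proof -
  show d1: "deg V z1 u + (if u = s then 1 else 0) + (if u = a then 1 else 0) = deg V z u"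
    unfolding z1 by (rule remove_edge(1)[where x=z and p=s and q=a, OF V sab(1,2) za])
  have c1: "cost V c z1 + c {s,a} = cost V c z"
    unfolding z1 by (rule remove_edge(2)[where x=z and p=s and q=a, OF V sab(1,2) za])
  show d0: "deg V z0 u + (if u = s then 1 else 0) + (if u = b then 1 else 0) = deg V z1 u"
    unfolding z0 by (rule remove_edge(1)[where x=z1 and p=s and q=b, OF V sab(1,3) zb])
  have c0: "cost V c z0 + c {s,b} = cost V c z1"
    unfolding z0 by (rule remove_edge(2)[where x=z1 and p=s and q=b, OF V sab(1,3) zb])
  have d2: "deg V z2 u = deg V z0 u + ((if u = a then 1 else 0) + (if u = b then 1 else 0))"
    unfolding z2 deg_add deg_delta[OF V sab(2,3)] ..
  have c2: "cost V c z2 = cost V c z0 + c {a,b}"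
    unfolding z2 cost_add cost_delta[OF V sab(2,3)] ..
  show "deg V z2 u + (if u = s then 2 else 0) = deg V z u"
  proof (cases "u = s")
    case True
    then show ?thesis using d1 d0 d2 by (simp add: sab)
  next
    case False
    then show ?thesis using d1 d0 d2 by simp
  qed
  have "c {a,b} \<le> c {a,s} + c {s,b}" using m sab unfolding metric_cost_def by blast
  moreover have "{a,s} = {s,a}" by (rule insert_commute)
  ultimately have "c {a,b} \<le> c {s,a} + c {s,b}" by simp
  then show "cost V c z2 \<le> cost V c z" using c1 c0 c2 by linarith
qed

lemma remove_loop:
  assumes V: "finite V" and m: "metric_cost V c" and s: "s \<in> V" and zs: "z {s} > 0"
  defines "y \<equiv> (\<lambda>e. if e = {s} then z e - 1 else z e)"
  shows "deg V y u + (if u = s then 2 else 0) = deg V z u" "cost V c y \<le> cost V c z"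
proof -
  have zs': "z {s,s} > 0" using zs by simp
  have "deg V y u + (if u = s then 1 else 0) + (if u = s then 1 else 0) = deg V z u"
    using remove_edge(1)[where x=z and p=s and q=s, OF V s s zs'] unfolding y_def by simp
  then show "deg V y u + (if u = s then 2 else 0) = deg V z u" by auto
  have "cost V c y + c {s,s} = cost V c z"
    using remove_edge(2)[where x=z and p=s and q=s, OF V s s zs'] unfolding y_def by simp
  then show "cost V c y \<le> cost V c z" using metric_edge[OF m s s] by simp
qed

lemma split_plain:
  assumes V: "finite V" and m: "metric_cost V c" and s: "s \<in> V" and d: "deg V z s \<ge> 2"
  shows "\<exists>z'. (\<forall>u. deg V z' u + (if u = s then 2 else 0) = deg V z u) \<and> cost V c z' \<le> cost V c z"
proof (cases "z {s} > 0")
  case True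
  then show ?thesis using remove_loop[where z=z, OF V m s True] by (intro exI[of _ "\<lambda>e. if e = {s} then z e - 1 else z e"]) simp
next
  case False
  then have z0: "z {s} = 0" by simp
  have "deg V z s > z {s,s}" using d z0 by simp
  then obtain a where a: "a \<in> V" "a \<noteq> s" "z {s,a} > 0" using nbr[where x=z, OF V s s z0] by blast
  define z1 where "z1 = (\<lambda>e. if e = {s,a} then z e - 1 else z e)"
  have "deg V z1 s + 1 = deg V z s"
    using remove_edge(1)[where x=z and p=s and q=a and u=s, OF V s a(1) a(3)] a(2) unfolding z1_def by simp
  moreover have "z1 {s} = 0" using z0 a(2) unfolding z1_def by (auto simp: doubleton_eq_iff)
  ultimately have "deg V z1 s > z1 {s,s}" "z1 {s} = 0" using d by auto
  then obtain b where b: "b \<in> V" "b \<noteq> s" "z1 {s,b} > 0" using nbr[where x=z1, OF V s s] by blast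
  define z0 where "z0 = (\<lambda>e. if e = {s,b} then z1 e - 1 else z1 e)"
  define z2 where "z2 = (\<lambda>e. z0 e + (if e = {a,b} then 1 else 0))"
  note S = split_off[OF V m s a(1) b(1) a(3) z1_def b(3) z0_def z2_def]
  have "\<forall>u. deg V z2 u + (if u = s then 2 else 0) = deg V z u" using S(3) by simp
  then show ?thesis using S(4) by (intro exI[of _ z2]) simp
qed



lemma transport_reduce:
  assumes V: "finite V" and m: "metric_cost V c" and S: "finite S" "S \<subseteq> V"
    and d: "\<forall>u\<in>V. deg V x u = 2 * q u + (if u \<in> S then 2 else 0)"
  shows "\<exists>Q. (\<forall>u\<in>V. deg V Q u = 2 * q u) \<and> cost V c Q \<le> cost V c x"
  using S d
proof (induction S arbitrary: x rule: finite_induct)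
  case empty
  then show ?case by auto
next
  case (insert s S)
  have s: "s \<in> V" using insert by auto
  have "deg V x s \<ge> 2" using insert.prems(2) s by auto
  then obtain x' where x': "\<forall>u. deg V x' u + (if u = s then 2 else 0) = deg V x u"
    "cost V c x' \<le> cost V c x" using split_plain[OF V m s] by blast
  have "\<forall>u\<in>V. deg V x' u = 2 * q u + (if u \<in> S then 2 else 0)"
  proof
    fix u assume u: "u \<in> V"
    show "deg V x' u = 2 * q u + (if u \<in> S then 2 else 0)"
      using x'(1)[rule_format, of u] insert.prems(2)[rule_format, OF u] insert.hyps(2)
      by (cases "u = s") auto
  qed
  then obtain Q where "\<forall>u\<in>V. deg V Q u = 2 * q u" "cost V c Q \<le> cost V c x'"
    using insert.IH insert.prems(1) by blast
  then show ?case using x'(2) by (intro exI[of _ Q]) simp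
qed

lemma conn_mono:
  assumes "supp_connected V z" "R V z \<subseteq> (R V y)\<^sup>*"
  shows "supp_connected V y"
proof -
  have "(R V z)\<^sup>* \<subseteq> (R V y)\<^sup>*" using assms(2) by (rule rtrancl_subset_rtrancl)
  then show ?thesis using assms(1) unfolding supp_connected_R by blast
qed

lemma split_conn:
  assumes V: "finite V" and m: "metric_cost V c" and v: "v \<in> V"
    and con: "supp_connected V z" and ev: "\<forall>u\<in>V. even (deg V z u)" and d: "deg V z v \<ge> 4"
  shows "\<exists>z'. supp_connected V z' \<and> (\<forall>u. deg V z' u + (if u = v then 2 else 0) = deg V z u)
     \<and> cost V c z' \<le> cost V c z"
proof (cases "z {v} > 0")
  case True
  define y where "y = (\<lambda>e. if e = {v} then z e - 1 else z e)"
  note L = remove_loop[where z=z, OF V m v True, folded y_def]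
  have "R V z \<subseteq> (R V y)\<^sup>*"
  proof
    fix pq assume "pq \<in> R V z"
    then obtain p q where pq: "pq = (p, q)" "p \<in> V" "q \<in> V" "z {p,q} > 0" unfolding R_def by auto
    show "pq \<in> (R V y)\<^sup>*"
    proof (cases "{p,q} = {v}")
      case True then have "p = q" by (auto simp: doubleton_eq_iff)
      then show ?thesis using pq by simp
    next
      case False then have "y {p,q} = z {p,q}" unfolding y_def by (rule if_not_P)
      then have "y {p,q} > 0" using pq by simp
      then show ?thesis using pq unfolding R_def by auto
    qed
  qed
  then have "supp_connected V y" by (rule conn_mono[OF con])
  then show ?thesis using L by (intro exI[of _ y]) simp
next
  case False
  then have zv: "z {v} = 0" by simp
  have "deg V z v > z {v,v}" using d zv by simp
  then obtain a where a: "a \<in> V" "a \<noteq> v" "z {v,a} > 0" using nbr[where x=z, OF V v v zv] by blast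
  define z1 where "z1 = (\<lambda>e. if e = {v,a} then z e - 1 else z e)"
  have d1: "\<And>u. deg V z1 u + (if u = v then 1 else 0) + (if u = a then 1 else 0) = deg V z u"
    unfolding z1_def by (rule remove_edge(1)[where x=z and p=v and q=a, OF V v a(1) a(3)])
  have z1v: "z1 {v} = 0" using zv a(2) unfolding z1_def by (auto simp: doubleton_eq_iff)
  have dz1v: "deg V z1 v \<ge> 3" using d1[of v] d a(2) by simp
  have "Suc (deg V z1 a) = deg V z a" using d1[of a] a(2) by simp
  moreover have "even (deg V z a)" using ev a(1) by blast
  ultimately have "odd (deg V z1 a)" by (metis even_Suc)
  then obtain w where w: "w \<in> V" "w \<noteq> a" "odd (deg V z1 w)" "(a, w) \<in> (R V z1)\<^sup>*"
    using odd_partner[where x=z1, OF V a(1)] by blast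
  have "w = v"
  proof (rule ccontr)
    assume "w \<noteq> v"
    then have "deg V z1 w = deg V z w" using d1[of w] w(2) by simp
    moreover have "even (deg V z w)" using ev w(1) by blast
    ultimately show False using w(3) by simp
  qed
  then have va: "(v, a) \<in> (R V z1)\<^sup>*" using R_sym[OF w(4)] by simp
  define Rv where "Rv = {(p, q). (p, q) \<in> R V z1 \<and> p \<noteq> v \<and> q \<noteq> v}"
  obtain p1 where p1: "(v, p1) \<in> R V z1" "(p1, a) \<in> Rv\<^sup>*"
  proof -
    have "a = v \<or> (\<exists>p1. (v, p1) \<in> R V z1 \<and> (p1, a) \<in> Rv\<^sup>*)"
      using path_first[OF va] unfolding Rv_def .
    then show ?thesis using a(2) that by blast
  qed
  have p1V: "p1 \<in> V" "z1 {v,p1} > 0" using p1(1) unfolding R_def by auto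
  have p1v: "p1 \<noteq> v" using p1V(2) z1v by auto
  obtain b where b: "b \<in> V" "b \<noteq> v" "z1 {v,b} > 0"
     and bp: "b = p1 \<Longrightarrow> z1 {v,p1} \<ge> 2"
  proof (cases "z1 {v,p1} \<ge> 2")
    case True
    then show ?thesis using that[of p1] p1V p1v by simp
  next
    case False
    then have "z1 {v,p1} < deg V z1 v" using dz1v by simp
    then obtain b where "b \<in> V" "b \<noteq> v" "b \<noteq> p1" "z1 {v,b} > 0"
      using nbr[where x=z1, OF V v p1V(1) z1v] by blast
    then show ?thesis using that[of b] by simp
  qed
  define z0 where "z0 = (\<lambda>e. if e = {v,b} then z1 e - 1 else z1 e)"
  define z2 where "z2 = (\<lambda>e. z0 e + (if e = {a,b} then 1 else 0))"
  note S = split_off[OF V m v a(1) b(1) a(3) z1_def b(3) z0_def z2_def]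
  have z0p1: "z0 {v,p1} > 0"
  proof (cases "b = p1")
    case True then show ?thesis using bp unfolding z0_def by simp
  next
    case False
    then have "{v,p1} \<noteq> {v,b}" using p1v b(2) by (auto simp: doubleton_eq_iff)
    then show ?thesis using p1V unfolding z0_def by simp
  qed
  have "Rv \<subseteq> R V z0"
  proof
    fix pq assume "pq \<in> Rv"
    then obtain p q where pq: "pq = (p, q)" "p \<in> V" "q \<in> V" "z1 {p,q} > 0" "p \<noteq> v" "q \<noteq> v"
      unfolding Rv_def R_def by auto
    then have "{p,q} \<noteq> {v,b}" by (auto simp: doubleton_eq_iff)
    then show "pq \<in> R V z0" using pq unfolding z0_def R_def by simp
  qed
  then have "(p1, a) \<in> (R V z0)\<^sup>*" using p1(2) rtrancl_mono by blast
  moreover have "(v, p1) \<in> R V z0" using z0p1 v p1V(1) unfolding R_def by simp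
  ultimately have va0: "(v, a) \<in> (R V z0)\<^sup>*" by (meson converse_rtrancl_into_rtrancl)
  have ab0: "(a, b) \<in> (R V z0)\<^sup>*"
  proof (cases "a = b")
    case True then show ?thesis by simp
  next
    case ab: False
    have "deg V z0 b + 1 = deg V z b" using S(1)[of b] S(2)[of b] b(2) ab by simp
    moreover have "even (deg V z b)" using ev b(1) by blast
    ultimately have "odd (deg V z0 b)" by (metis Suc_eq_plus1 even_Suc)
    then obtain w where w: "w \<in> V" "w \<noteq> b" "odd (deg V z0 w)" "(b, w) \<in> (R V z0)\<^sup>*"
      using odd_partner[where x=z0, OF V b(1)] by blast
    have "w = a"
    proof (rule ccontr)
      assume "w \<noteq> a"
      then have "deg V z0 w + (if w = v then 2 else 0) = deg V z w"
        using S(1)[of w] S(2)[of w] w(2) by auto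
      moreover have "even (deg V z w)" using ev w(1) by blast
      ultimately show False using w(3) by (cases "w = v") (auto, metis even_Suc)
    qed
    then show ?thesis using R_sym[OF w(4)] by simp
  qed
  have vb0: "(v, b) \<in> (R V z0)\<^sup>*" using va0 ab0 by (rule rtrancl_trans)
  have "R V z \<subseteq> (R V z0)\<^sup>*"
  proof
    fix pq assume "pq \<in> R V z"
    then obtain p q where pq: "pq = (p, q)" "p \<in> V" "q \<in> V" "z {p,q} > 0" unfolding R_def by auto
    show "pq \<in> (R V z0)\<^sup>*"
    proof (cases "{p,q} = {v,a}")
      case True
      then have "(p = v \<and> q = a) \<or> (p = a \<and> q = v)" by (auto simp: doubleton_eq_iff)
      then show ?thesis using pq(1) va0 R_sym[OF va0] by auto
    next
      case na: False
      show ?thesis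
      proof (cases "{p,q} = {v,b}")
        case True
        then have "(p = v \<and> q = b) \<or> (p = b \<and> q = v)" by (auto simp: doubleton_eq_iff)
        then show ?thesis using pq(1) vb0 R_sym[OF vb0] by auto
      next
        case False
        have "z0 {p,q} = z1 {p,q}" unfolding z0_def using False by (rule if_not_P)
        also have "z1 {p,q} = z {p,q}" unfolding z1_def using na by (rule if_not_P)
        finally have "z0 {p,q} = z {p,q}" .
        then show ?thesis using pq unfolding R_def by auto
      qed
    qed
  qed
  moreover have "R V z0 \<subseteq> R V z2" unfolding R_def z2_def by auto
  then have "(R V z0)\<^sup>* \<subseteq> (R V z2)\<^sup>*" by (rule rtrancl_mono)
  ultimately have "R V z \<subseteq> (R V z2)\<^sup>*" by (rule order_trans)
  then have "supp_connected V z2" by (rule conn_mono[OF con])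
  moreover have "\<forall>u. deg V z2 u + (if u = v then 2 else 0) = deg V z u" using S(3) by simp
  ultimately show ?thesis using S(4) by (intro exI[of _ z2]) simp
qed



lemma tour_exists:
  assumes V: "finite V" and m: "metric_cost V c"
    and d: "\<forall>u\<in>V. deg V z u = 2 * r u" and r1: "\<forall>u\<in>V. r u \<ge> 1" and con: "supp_connected V z"
  shows "\<exists>H. tsp_tour V H \<and> cost V c H \<le> cost V c z"
  using d r1 con
proof (induction "\<Sum>u\<in>V. r u" arbitrary: z r rule: less_induct)
  case less
  show ?case
  proof (cases "\<forall>u\<in>V. r u = 1")
    case True
    then have "tsp_tour V z" using less.prems unfolding tsp_tour_def mvtsp_feasible_def by simp
    then show ?thesis by blast
  next
    case False
    then obtain v where v: "v \<in> V" "r v \<ge> 2" using less.prems(2) by force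
    have ev: "\<forall>u\<in>V. even (deg V z u)" using less.prems(1) by simp
    have "deg V z v \<ge> 4" using less.prems(1) v by simp
    then obtain z' where z': "supp_connected V z'" "\<forall>u. deg V z' u + (if u = v then 2 else 0) = deg V z u"
      "cost V c z' \<le> cost V c z"
      using split_conn[OF V m v(1) less.prems(3) ev] by blast
    define r' where "r' = r(v := r v - 1)"
    have d': "\<forall>u\<in>V. deg V z' u = 2 * r' u"
    proof
      fix u assume u: "u \<in> V"
      show "deg V z' u = 2 * r' u"
        using z'(2)[rule_format, of u] less.prems(1)[rule_format, OF u] v(2)
        unfolding r'_def by (cases "u = v") auto
    qed
    have r1': "\<forall>u\<in>V. r' u \<ge> 1" using less.prems(2) v(2) unfolding r'_def by auto
    have lt: "(\<Sum>u\<in>V. r' u) < (\<Sum>u\<in>V. r u)"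
    proof (rule sum_strict_mono_ex1[OF V])
      show "\<forall>x\<in>V. r' x \<le> r x" unfolding r'_def by auto
      show "\<exists>a\<in>V. r' a < r a" using v unfolding r'_def by (intro bexI[of _ v]) auto
    qed
    obtain H where "tsp_tour V H" "cost V c H \<le> cost V c z'"
      using less.hyps[OF lt d' r1' z'(1)] by blast
    then show ?thesis using z'(3) by (intro exI[of _ H]) simp
  qed
qed

theorem theorem5:
  fixes V :: "'a set" and c :: "'a set \<Rightarrow> real" and r :: "'a \<Rightarrow> nat"
    and \<alpha> :: real and T1 P :: "'a set \<Rightarrow> nat"
  assumes "finite V" and "V \<noteq> {}"
    and "metric_cost V c"
    and "\<forall>v\<in>V. r v \<ge> 1"
    and "\<alpha> \<ge> 1"
    and "tsp_tour V T1"
    and "cost V c T1 \<le> \<alpha> * mvtsp_opt V c (\<lambda>_. 1)"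
    and "transport_opt V c (\<lambda>v. r v - 1) P"
  shows "mvtsp_feasible V r (\<lambda>e. T1 e + P e)
         \<and> cost V c (\<lambda>e. T1 e + P e) \<le> (\<alpha> + 1) * mvtsp_opt V c r"
proof -
  note V = assms(1) and m = assms(3) and r1 = assms(4)
  have T1d: "\<forall>u\<in>V. deg V T1 u = 2" and T1c: "supp_connected V T1"
    using assms(6) unfolding tsp_tour_def mvtsp_feasible_def by auto
  have Pd: "\<forall>u\<in>V. deg V P u = 2 * (r u - 1)"
    and Popt: "\<And>Q. (\<forall>u\<in>V. deg V Q u = 2 * (r u - 1)) \<Longrightarrow> cost V c P \<le> cost V c Q"
    using assms(8) unfolding transport_opt_def by auto
  have feas: "mvtsp_feasible V r (\<lambda>e. T1 e + P e)"
    unfolding mvtsp_feasible_def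
  proof
    show "\<forall>v\<in>V. deg V (\<lambda>e. T1 e + P e) v = 2 * r v"
      using T1d Pd r1 by (auto simp: deg_add)
    have "R V T1 \<subseteq> (R V (\<lambda>e. T1 e + P e))\<^sup>*" unfolding R_def by auto
    then show "supp_connected V (\<lambda>e. T1 e + P e)" by (rule conn_mono[OF T1c])
  qed
  define Sr where "Sr = {cost V c z |z. mvtsp_feasible V r z}"
  define S1 where "S1 = {cost V c z |z. mvtsp_feasible V (\<lambda>_. 1) z}"
  have Sr_ne: "Sr \<noteq> {}" using feas unfolding Sr_def by blast
  have S1_bdd: "bdd_below S1" unfolding S1_def bdd_below_def using cost_nonneg[OF m] by blast
  have cP: "cost V c P \<le> mvtsp_opt V c r"
    unfolding mvtsp_opt_def Sr_def[symmetric]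
  proof (rule cInf_greatest[OF Sr_ne])
    fix x assume "x \<in> Sr"
    then obtain z where z: "x = cost V c z" "mvtsp_feasible V r z" unfolding Sr_def by blast
    have "\<forall>u\<in>V. deg V z u = 2 * (r u - 1) + (if u \<in> V then 2 else 0)"
      using z(2) r1 unfolding mvtsp_feasible_def by auto
    then obtain Q where "\<forall>u\<in>V. deg V Q u = 2 * (r u - 1)" "cost V c Q \<le> cost V c z"
      using transport_reduce[where x=z and q="\<lambda>u. r u - 1", OF V m V subset_refl] by blast
    then show "cost V c P \<le> x" using Popt z(1) by fastforce
  qed
  have c1: "mvtsp_opt V c (\<lambda>_. 1) \<le> mvtsp_opt V c r"
    unfolding mvtsp_opt_def Sr_def[symmetric] S1_def[symmetric]
  proof (rule cInf_greatest[OF Sr_ne])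
    fix x assume "x \<in> Sr"
    then obtain z where z: "x = cost V c z" "mvtsp_feasible V r z" unfolding Sr_def by blast
    obtain H where H: "tsp_tour V H" "cost V c H \<le> cost V c z"
      using tour_exists[OF V m _ r1] z(2) unfolding mvtsp_feasible_def by blast
    have "cost V c H \<in> S1" using H(1) unfolding S1_def tsp_tour_def by blast
    then have "Inf S1 \<le> cost V c H" using S1_bdd by (rule cInf_lower)
    then show "Inf S1 \<le> x" using H(2) z(1) by simp
  qed
  have "\<alpha> * mvtsp_opt V c (\<lambda>_. 1) \<le> \<alpha> * mvtsp_opt V c r"
    using c1 assms(5) by (intro mult_left_mono) auto
  then have "cost V c T1 \<le> \<alpha> * mvtsp_opt V c r"
    using assms(7) by linarith
  then have "cost V c (\<lambda>e. T1 e + P e) \<le> (\<alpha> + 1) * mvtsp_opt V c r"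
    using cP by (simp add: cost_add distrib_right)
  then show ?thesis using feas by simp
qed


end
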